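(* Let $(X,\nu)$ be a $\sigma$-finite measure space, let $\omega:X\to(0,\infty)$ be a measurable function, and let $1<q_0\le p_0<\infty$ with $\frac1{p_0}+\frac1{q_0}=1$. Then for every $f\in L^1(X,\nu)\cap L^{q_0}(X,\omega^{1/p_0})$ with $\|f\|_1=1$, the map \[ [p_0,\infty)\to\mathbb{R},\qquad p\mapsto -p\log\|f\|_{q,\omega^{1/p}}, \] where $q$ is given by $\frac1p+\frac1q=1$, is increasing. Equivalently, the map $(1,q_0]\to\mathbb{R}$, $q\mapsto -p\log\|f\|_{q,\omega^{1/p}}$ is decreasing.
   Context: For a measurable $\omega:X\to(0,\infty)$ and $1\le p<\infty$, the weighted space $L^p(X,\omega)$ consists of measurable $f:X\to\mathbb{C}$ with $\|f\|_{p,\omega}=\big(\int_X|f|^p\omega^p\,d\nu\big)^{1/p}<\infty$. Thus $\|f\|_{q,\omega^{1/p}}=\big(\int_X|f|^q\omega^{q/p}\,d\nu\big)^{1/q}$, and $\|f\|_1=\int_X|f|\,d\nu$. *)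

theory Defs
  imports "HOL-Analysis.Analysis"
begin

text \<open>Weighted L^p norm: (integral of |f|^p w^p)^(1/p), computed as a nonnegative
  integral; finiteness is asserted separately where membership in L^p(X,w) is needed.\<close>
definition wLp_nn :: "'a measure \<Rightarrow> ('a \<Rightarrow> real) \<Rightarrow> real \<Rightarrow> ('a \<Rightarrow> complex) \<Rightarrow> ennreal" where
  "wLp_nn M w p f = (\<integral>\<^sup>+ x. ennreal (norm (f x) powr p * w x powr p) \<partial>M)"

definition wLp_norm :: "'a measure \<Rightarrow> ('a \<Rightarrow> real) \<Rightarrow> real \<Rightarrow> ('a \<Rightarrow> complex) \<Rightarrow> real" where
  "wLp_norm M w p f = (enn2real (wLp_nn M w p f)) powr (1 / p)"

end

theory Submission
  imports Defs
begin

lemma integrand_eq: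
  fixes F w p :: real assumes "F \<ge> 0" "w > 0" "p > 1"
  shows "F powr (p/(p-1)) * (w powr (1/p)) powr (p/(p-1)) = F * (F*w) powr (1/(p-1))"
proof (cases "F = 0")
  case True then show ?thesis by simp
next
  case False
  then have F: "F > 0" using assms by simp
  have e: "p/(p-1) = 1 + 1/(p-1)" using assms by (simp add: field_simps)
  have e2: "1/p * (p/(p-1)) = 1/(p-1)" using assms by (simp add: field_simps)
  have "F powr (p/(p-1)) = F * F powr (1/(p-1))"
    unfolding e using F by (simp add: powr_add)
  moreover have "(w powr (1/p)) powr (p/(p-1)) = w powr (1/(p-1))"
    using assms by (simp add: powr_powr e2)
  ultimately show ?thesis using F assms by (simp add: powr_mult)
qed

lemma young_pt:
  fixes y r :: real assumes "0 < r" "r \<le> 1" "y \<ge> 0"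
  shows "y powr r \<le> (1 - r) + r * y"
proof (cases "y = 0")
  case True then show ?thesis using assms by simp
next
  case False
  then have "y powr r * 1 powr (1 - r) \<le> r * y + (1 - r) * 1"
    using assms by (intro Youngs_inequality_0) auto
  then show ?thesis by simp
qed

lemma powr_bound_pt:
  fixes y t t0 :: real assumes "y \<ge> 0" "0 < t" "t \<le> t0"
  shows "y powr t \<le> 1 + y powr t0"
proof (cases "y \<le> 1")
  case True
  then have "y powr t \<le> 1" using assms by (intro powr_le1) auto
  then show ?thesis by (smt (verit) powr_ge_zero)
next
  case False
  then have "y powr t \<le> y powr t0" using assms by (intro powr_mono) auto
  then show ?thesis by simp
qed

theorem proposition2p1:
  fixes M :: "'a measure" and \<omega> :: "'a \<Rightarrow> real" and f :: "'a \<Rightarrow> complex"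
    and p0 q0 :: real
  assumes "sigma_finite_measure M"
    and "\<omega> \<in> borel_measurable M" and "\<forall>x\<in>space M. \<omega> x > 0"
    and "1 < q0" and "q0 \<le> p0" and "1 / p0 + 1 / q0 = 1"
    and "integrable M f"
    and "f \<in> borel_measurable M"
    and "wLp_nn M (\<lambda>x. \<omega> x powr (1 / p0)) q0 f < \<infinity>"
    and "(\<integral>x. norm (f x) \<partial>M) = 1"
  shows "mono_on {p0..}
           (\<lambda>p. - p * ln (wLp_norm M (\<lambda>x. \<omega> x powr (1 / p)) (p / (p - 1)) f))"
proof -
  note meas[measurable] = assms(2) assms(8)
  define F where "F x = norm (f x)" for x
  define G where "G x = F x * \<omega> x" for x
  define I where "I t = (\<integral>x. F x * G x powr t \<partial>M)" for t
  have Fm[measurable]: "F \<in> borel_measurable M" unfolding F_def by measurable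
  have Gm[measurable]: "G \<in> borel_measurable M" unfolding G_def by measurable
  have F_nn: "\<And>x. F x \<ge> 0" unfolding F_def by simp
  have G_nn: "\<And>x. x \<in> space M \<Longrightarrow> G x \<ge> 0" unfolding G_def using F_nn assms(3)
    by (simp add: less_imp_le)
  have p0: "p0 > 1"
  proof -
    have "1 / q0 < 1" using assms(4) by simp
    then have "1 / p0 > 0" using assms(6) by linarith
    then have "p0 > 0" by (simp add: zero_less_divide_iff)
    moreover have "1 / p0 < 1" using assms(4,6) by (smt (verit) divide_pos_pos)
    ultimately show ?thesis by (simp add: divide_less_eq)
  qed
  define t0 where "t0 = 1/(p0-1)"
  have t0pos: "t0 > 0" unfolding t0_def using p0 by simp
  have q0eq: "q0 = p0/(p0-1)"
  proof -
    have "1 / q0 = (p0 - 1) / p0" using assms(6) p0 by (simp add: field_simps)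
    then show ?thesis using p0 assms(4) by (simp add: field_simps)
  qed
  have intF: "integrable M F" unfolding F_def using assms(7) by simp
  have intF1: "(\<integral>x. F x \<partial>M) = 1" unfolding F_def using assms(10) by simp
  have fin0: "(\<integral>\<^sup>+x. ennreal (F x * G x powr t0) \<partial>M) < \<infinity>"
  proof -
    have "(\<integral>\<^sup>+x. ennreal (F x * G x powr t0) \<partial>M) = wLp_nn M (\<lambda>x. \<omega> x powr (1 / p0)) q0 f"
      unfolding wLp_nn_def q0eq
      by (intro nn_integral_cong)
         (simp add: integrand_eq[OF F_nn _ p0] assms(3) F_def[symmetric] G_def t0_def)
    then show ?thesis using assms(9) by simp
  qed
  have int0: "integrable M (\<lambda>x. F x * G x powr t0)"
    by (rule integrableI_nonneg) (use fin0 F_nn in auto)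
  have intt: "integrable M (\<lambda>x. F x * G x powr t)" if "0 < t" "t \<le> t0" for t
  proof (rule Bochner_Integration.integrable_bound[OF Bochner_Integration.integrable_add[OF intF int0]])
    show "(\<lambda>x. F x * G x powr t) \<in> borel_measurable M" by measurable
    show "AE x in M. norm (F x * G x powr t) \<le> norm (F x + F x * G x powr t0)"
    proof (rule AE_I2)
      fix x assume x: "x \<in> space M"
      have "F x * G x powr t \<le> F x * (1 + G x powr t0)"
        using powr_bound_pt[OF G_nn[OF x] that] F_nn by (simp add: mult_left_mono)
      then show "norm (F x * G x powr t) \<le> norm (F x + F x * G x powr t0)"
        using F_nn[of x] by (simp add: algebra_simps)
    qed
  qed
  have Ipos: "I t > 0" if "0 < t" "t \<le> t0" for t
  proof -
    have nn: "I t \<ge> 0" unfolding I_def using F_nn by simp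
    show ?thesis
    proof (rule ccontr)
      assume "\<not> I t > 0"
      then have "I t = 0" using nn by simp
      then have "AE x in M. F x * G x powr t = 0"
        unfolding I_def using intt[OF that] F_nn
        by (subst (asm) integral_nonneg_eq_0_iff_AE) auto
      then have "AE x in M. F x = 0"
      proof (rule AE_mp[OF _ AE_I2], intro impI)
        fix x assume x: "x \<in> space M" and h: "F x * G x powr t = 0"
        show "F x = 0"
        proof (rule ccontr)
          assume "F x \<noteq> 0"
          then have "G x \<noteq> 0" unfolding G_def using assms(3) x by (metis less_irrefl mult_eq_0_iff)
          then have "G x powr t \<noteq> 0" by simp
          with h \<open>F x \<noteq> 0\<close> show False by simp
        qed
      qed
      then have "(\<integral>x. F x \<partial>M) = (\<integral>x. 0 \<partial>M)" by (intro integral_cong_AE Fm) auto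
      then show False using intF1 by simp
    qed
  qed
  have main: "I s \<le> I t powr (s/t)" if "0 < s" "s \<le> t" "t \<le> t0" for s t
  proof -
    define A where "A = I t"
    define r where "r = s / t"
    have A: "A > 0" unfolding A_def using Ipos that by simp
    have r: "0 < r" "r \<le> 1" unfolding r_def using that by auto
    have pt: "F x * G x powr s \<le> A powr r * ((1 - r) * F x + (r / A) * (F x * G x powr t))"
      if x: "x \<in> space M" for x
    proof -
      have "G x powr s = (G x powr t / A) powr r * A powr r"
        using A r that G_nn[OF x] \<open>0 < s\<close> \<open>s \<le> t\<close>
        by (simp add: powr_divide powr_powr r_def)
      also have "\<dots> \<le> ((1 - r) + r * (G x powr t / A)) * A powr r"
        using young_pt[OF r, of "G x powr t / A"] A by (intro mult_right_mono) auto
      finally have "F x * G x powr s \<le> F x * (((1 - r) + r * (G x powr t / A)) * A powr r)"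
        using F_nn by (intro mult_left_mono) auto
      then show ?thesis by (simp add: algebra_simps)
    qed
    have "I s \<le> (\<integral>x. A powr r * ((1 - r) * F x + (r / A) * (F x * G x powr t)) \<partial>M)"
      unfolding I_def
      using pt intt[of s] intt[of t] intF that
      by (intro integral_mono) auto
    also have "\<dots> = A powr r * ((1 - r) * 1 + (r / A) * A)"
      using intt[of t] intF that intF1
      by (simp add: A_def I_def)
    also have "\<dots> = A powr r" using A by simp
    finally show ?thesis unfolding A_def r_def .
  qed
  have val: "wLp_norm M (\<lambda>x. \<omega> x powr (1 / p)) (p / (p - 1)) f = I (1/(p-1)) powr ((p-1)/p)"
    if "p \<ge> p0" for p
  proof -
    have p: "p > 1" using that p0 by simp
    have "enn2real (wLp_nn M (\<lambda>x. \<omega> x powr (1 / p)) (p / (p - 1)) f) = I (1/(p-1))"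
      unfolding wLp_nn_def I_def
      by (rule enn2real_nn_integral_eq_integral)
         (auto simp: integrand_eq[OF F_nn _ p] assms(3) F_def[symmetric] G_def F_nn)
    moreover have "1 / (p / (p - 1)) = (p-1)/p" by simp
    ultimately show ?thesis unfolding wLp_norm_def by simp
  qed
  show ?thesis
  proof (rule mono_onI)
    fix p p' assume a: "p \<in> {p0..}" "p' \<in> {p0..}" "p \<le> p'"
    have p: "p > 1" "p' > 1" using a p0 by auto
    define t where "t = 1/(p-1)"
    define s where "s = 1/(p'-1)"
    have st: "0 < s" "s \<le> t" "t \<le> t0"
      using a p p0 unfolding s_def t_def t0_def by (auto intro!: divide_left_mono mult_pos_pos)
    have It: "I t > 0" using Ipos st by simp
    have Is: "I s > 0" using Ipos st by simp
    have "ln (I s) \<le> ln (I t powr (s/t))"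
      using main[OF st] Is It by (subst ln_le_cancel_iff) auto
    then have h: "ln (I s) \<le> (s/t) * ln (I t)" using It by simp
    have "s / t = (p - 1) / (p' - 1)" unfolding s_def t_def using p by simp
    with h have "(p'-1) * ln (I s) \<le> (p - 1) * ln (I t)"
      using p by (simp add: field_simps)
    then show "- p * ln (wLp_norm M (\<lambda>x. \<omega> x powr (1 / p)) (p / (p - 1)) f)
        \<le> - p' * ln (wLp_norm M (\<lambda>x. \<omega> x powr (1 / p')) (p' / (p' - 1)) f)"
    proof -
      have v1: "- p * ln (wLp_norm M (\<lambda>x. \<omega> x powr (1 / p)) (p / (p - 1)) f) = - ((p - 1) * ln (I t))"
        using a It p by (simp add: val t_def[symmetric])
      have v2: "- p' * ln (wLp_norm M (\<lambda>x. \<omega> x powr (1 / p')) (p' / (p' - 1)) f) = - ((p' - 1) * ln (I s))"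
        using a Is p by (simp add: val s_def[symmetric])
      show ?thesis unfolding v1 v2 using \<open>(p'-1) * ln (I s) \<le> (p - 1) * ln (I t)\<close> by simp
    qed
  qed
qed

end
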